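(* Fix $\epsilon_2>0$ and $(u_\pm,v_\pm)$ with $v_\pm>0$ and $u_-<u_+$. For small $\epsilon_1>0$ let $(u^{\epsilon_1\epsilon_2},v^{\epsilon_1\epsilon_2})$ be the two-rarefaction-wave Riemann solution of the perturbed Brio system with data $(u_\pm,v_\pm)$. Then as $\epsilon_1\to0$ the solution converges to the Riemann solution of $u_t+(\tfrac12u^2)_x=0$, $v_t+(uv-\epsilon_2v)_x=0$ consisting of a contact discontinuity $x/t=u_--\epsilon_2$ followed by a rarefaction wave, with intermediate state $(u_*^{\epsilon_2},v_*^{\epsilon_2})=\big(u_-,\,v_+\exp(\tfrac{u_--u_+}{\epsilon_2})\big)$; explicitly, with $\xi=x/t$: $(u_-,v_-)$ for $\xi<u_--\epsilon_2$; $(u_-,v_*^{\epsilon_2})$ for $u_--\epsilon_2<\xi<u_-$; $\big(\xi,\,v_*^{\epsilon_2}\exp(\tfrac{\xi-u_-}{\epsilon_2})\big)$ for $u_-\le\xi\le u_+$; $(u_+,v_+)$ for $\xi>u_+$.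
   Context: Perturbed Brio system: $u_t+(\tfrac12u^2+\tfrac12\epsilon_1v^2)_x=0$, $v_t+(uv-\epsilon_2v)_x=0$, $\epsilon_1,\epsilon_2>0$, $v>0$, with Riemann data $(u_-,v_-)$ for $x<0$, $(u_+,v_+)$ for $x>0$. With $s(v)=\sqrt{\epsilon_2^2+4\epsilon_1v^2}$ and $\lambda_{1,2}=u-\tfrac12\epsilon_2\mp\tfrac12s(v)$, the two-rarefaction-wave solution has an intermediate state $(u_*,v_* )$ lying on the backward rarefaction curve $u-\tfrac12(-s(v)+\epsilon_2\ln(s(v)+\epsilon_2))=u_--\tfrac12(-s(v_-)+\epsilon_2\ln(s(v_-)+\epsilon_2))$, $v<v_-$, with $(u_+,v_+)$ on the forward rarefaction curve $u-\tfrac12(s(v)+\epsilon_2\ln(s(v)-\epsilon_2))=u_*-\tfrac12(s(v_* )+\epsilon_2\ln(s(v_* )-\epsilon_2))$, $v>v_*$; the solution consists of $(u_-,v_-)$, a 1-fan with $x/t=\lambda_1$, the state $(u_*,v_* )$, a 2-fan with $x/t=\lambda_2$, and $(u_+,v_+)$. *)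

theory Defs
  imports "HOL-Analysis.Analysis"
begin

text \<open>Perturbed Brio system
  u_t + (u^2/2 + e1 v^2/2)_x = 0,  v_t + (u v - e2 v)_x = 0.
  Self-similar Riemann solutions are written as functions of xi = x/t.\<close>

definition sbrio :: "real \<Rightarrow> real \<Rightarrow> real \<Rightarrow> real" where
  "sbrio e1 e2 v = sqrt (e2\<^sup>2 + 4 * e1 * v\<^sup>2)"

definition lam1 :: "real \<Rightarrow> real \<Rightarrow> real \<Rightarrow> real \<Rightarrow> real" where
  "lam1 e1 e2 u v = u - e2 / 2 - sbrio e1 e2 v / 2"

definition lam2 :: "real \<Rightarrow> real \<Rightarrow> real \<Rightarrow> real \<Rightarrow> real" where
  "lam2 e1 e2 u v = u - e2 / 2 + sbrio e1 e2 v / 2"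

text \<open>Riemann invariants defining the backward (1-) and forward (2-) rarefaction curves.\<close>
definition binv :: "real \<Rightarrow> real \<Rightarrow> real \<Rightarrow> real \<Rightarrow> real" where
  "binv e1 e2 u v = u - (- sbrio e1 e2 v + e2 * ln (sbrio e1 e2 v + e2)) / 2"

definition finv :: "real \<Rightarrow> real \<Rightarrow> real \<Rightarrow> real \<Rightarrow> real" where
  "finv e1 e2 u v = u - (sbrio e1 e2 v + e2 * ln (sbrio e1 e2 v - e2)) / 2"

definition two_rarefaction_solution ::
  "real \<Rightarrow> real \<Rightarrow> real \<Rightarrow> real \<Rightarrow> real \<Rightarrow> real \<Rightarrow> (real \<Rightarrow> real) \<Rightarrow> (real \<Rightarrow> real) \<Rightarrow> bool" where
  "two_rarefaction_solution e1 e2 um vm up vp U V \<longleftrightarrow>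
     (\<exists>us vs. 0 < vs \<and> vs < vm \<and> binv e1 e2 us vs = binv e1 e2 um vm \<and>
        vs < vp \<and> finv e1 e2 up vp = finv e1 e2 us vs \<and>
        (\<forall>xi.
          (xi < lam1 e1 e2 um vm \<longrightarrow> U xi = um \<and> V xi = vm) \<and>
          (lam1 e1 e2 um vm \<le> xi \<and> xi \<le> lam1 e1 e2 us vs \<longrightarrow>
             vs \<le> V xi \<and> V xi \<le> vm \<and> binv e1 e2 (U xi) (V xi) = binv e1 e2 um vm \<and>
             lam1 e1 e2 (U xi) (V xi) = xi) \<and>
          (lam1 e1 e2 us vs < xi \<and> xi < lam2 e1 e2 us vs \<longrightarrow> U xi = us \<and> V xi = vs) \<and>
          (lam2 e1 e2 us vs \<le> xi \<and> xi \<le> lam2 e1 e2 up vp \<longrightarrow>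
             vs \<le> V xi \<and> V xi \<le> vp \<and> finv e1 e2 (U xi) (V xi) = finv e1 e2 us vs \<and>
             lam2 e1 e2 (U xi) (V xi) = xi) \<and>
          (lam2 e1 e2 up vp < xi \<longrightarrow> U xi = up \<and> V xi = vp)))"

definition vstar_lim :: "real \<Rightarrow> real \<Rightarrow> real \<Rightarrow> real \<Rightarrow> real" where
  "vstar_lim e2 um up vp = vp * exp ((um - up) / e2)"

definition U_lim :: "real \<Rightarrow> real \<Rightarrow> real \<Rightarrow> real \<Rightarrow> real" where
  "U_lim e2 um up xi =
     (if xi < um - e2 then um else if xi < um then um else if xi \<le> up then xi else up)"

definition V_lim :: "real \<Rightarrow> real \<Rightarrow> real \<Rightarrow> real \<Rightarrow> real \<Rightarrow> real \<Rightarrow> real" where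
  "V_lim e2 um vm up vp xi =
     (if xi < um - e2 then vm
      else if xi < um then vstar_lim e2 um up vp
      else if xi \<le> up then vstar_lim e2 um up vp * exp ((xi - um) / e2)
      else vp)"

end

theory Submission
  imports Defs
begin

definition trs where
  "trs e1 e2 um vm up vp U V us vs \<longleftrightarrow>
     0 < vs \<and> vs < vm \<and> binv e1 e2 us vs = binv e1 e2 um vm \<and>
        vs < vp \<and> finv e1 e2 up vp = finv e1 e2 us vs \<and>
        (\<forall>xi.
          (xi < lam1 e1 e2 um vm \<longrightarrow> U xi = um \<and> V xi = vm) \<and>
          (lam1 e1 e2 um vm \<le> xi \<and> xi \<le> lam1 e1 e2 us vs \<longrightarrow>
             vs \<le> V xi \<and> V xi \<le> vm \<and> binv e1 e2 (U xi) (V xi) = binv e1 e2 um vm \<and>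
             lam1 e1 e2 (U xi) (V xi) = xi) \<and>
          (lam1 e1 e2 us vs < xi \<and> xi < lam2 e1 e2 us vs \<longrightarrow> U xi = us \<and> V xi = vs) \<and>
          (lam2 e1 e2 us vs \<le> xi \<and> xi \<le> lam2 e1 e2 up vp \<longrightarrow>
             vs \<le> V xi \<and> V xi \<le> vp \<and> finv e1 e2 (U xi) (V xi) = finv e1 e2 us vs \<and>
             lam2 e1 e2 (U xi) (V xi) = xi) \<and>
          (lam2 e1 e2 up vp < xi \<longrightarrow> U xi = up \<and> V xi = vp))"

lemma trs_iff: "two_rarefaction_solution e1 e2 um vm up vp U V \<longleftrightarrow> (\<exists>us vs. trs e1 e2 um vm up vp U V us vs)"
  unfolding two_rarefaction_solution_def trs_def by blast

lemma choose_ev: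
  assumes "eventually (\<lambda>e. \<exists>a b. R e a b) F"
  shows "\<exists>fa fb. eventually (\<lambda>e. R e (fa e) (fb e)) F"
proof -
  define p where "p e = (SOME q. R e (fst q) (snd q))" for e
  have "eventually (\<lambda>e. R e (fst (p e)) (snd (p e))) F"
    using assms
  proof (rule eventually_mono)
    fix e assume "\<exists>a b. R e a b"
    then have "\<exists>q. R e (fst q) (snd q)" by auto
    then show "R e (fst (p e)) (snd (p e))" unfolding p_def by (rule someI_ex)
  qed
  then show ?thesis by (intro exI[of _ "\<lambda>e. fst (p e)"] exI[of _ "\<lambda>e. snd (p e)"])
qed

lemma tendsto_split3:
  assumes "eventually (\<lambda>e. A e \<or> B e \<or> C e) F"
    and "(f \<longlongrightarrow> L) (inf F (principal {e. A e}))"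
    and "(f \<longlongrightarrow> L) (inf F (principal {e. B e}))"
    and "(f \<longlongrightarrow> L) (inf F (principal {e. C e}))"
  shows "(f \<longlongrightarrow> L) F"
  unfolding tendsto_def
proof (intro allI impI)
  fix S assume S: "open S" "L \<in> S"
  have 1: "eventually (\<lambda>e. A e \<longrightarrow> f e \<in> S) F"
    using assms(2) S unfolding tendsto_def eventually_inf_principal by auto
  have 2: "eventually (\<lambda>e. B e \<longrightarrow> f e \<in> S) F"
    using assms(3) S unfolding tendsto_def eventually_inf_principal by auto
  have 3: "eventually (\<lambda>e. C e \<longrightarrow> f e \<in> S) F"
    using assms(4) S unfolding tendsto_def eventually_inf_principal by auto
  show "eventually (\<lambda>e. f e \<in> S) F"
    using assms(1) 1 2 3 by eventually_elim blast
qed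

lemma tendsto_False:
  assumes "eventually (\<lambda>_. False) G" shows "(f \<longlongrightarrow> L) G"
  using assms by (simp add: eventually_False)

lemma sbrio_ge: "0 \<le> e \<Longrightarrow> 0 < e2 \<Longrightarrow> e2 \<le> sbrio e e2 v"
  unfolding sbrio_def by (rule real_le_rsqrt) simp

lemma sbrio_mono: "0 \<le> e \<Longrightarrow> 0 \<le> v \<Longrightarrow> v \<le> c \<Longrightarrow> sbrio e e2 v \<le> sbrio e e2 c"
  unfolding sbrio_def
  by (intro real_sqrt_le_mono add_left_mono mult_left_mono power_mono) auto

lemma sbrio_lim_const:
  assumes "0 < e2" "((\<lambda>e. e) \<longlongrightarrow> 0) G"
  shows "((\<lambda>e. sbrio e e2 c) \<longlongrightarrow> e2) G"
proof -
  have "((\<lambda>e. sqrt (e2\<^sup>2 + 4 * e * c\<^sup>2)) \<longlongrightarrow> sqrt (e2\<^sup>2 + 4 * 0 * c\<^sup>2)) G"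
    by (intro tendsto_intros assms)
  then show ?thesis using assms(1) unfolding sbrio_def by simp
qed

lemma sbrio_lim_bounded:
  assumes "0 < e2" "((\<lambda>e. e) \<longlongrightarrow> 0) G"
    and "eventually (\<lambda>e. 0 < e \<and> 0 \<le> w e \<and> w e \<le> c) G"
  shows "((\<lambda>e. sbrio e e2 (w e)) \<longlongrightarrow> e2) G"
proof (rule tendsto_sandwich[OF _ _ tendsto_const sbrio_lim_const[OF assms(1,2), of c]])
  show "eventually (\<lambda>e. e2 \<le> sbrio e e2 (w e)) G"
    using assms(3) by eventually_elim (auto intro: sbrio_ge assms(1))
  show "eventually (\<lambda>e. sbrio e e2 (w e) \<le> sbrio e e2 c) G"
    using assms(3) by eventually_elim (auto intro: sbrio_mono)
qed

lemma ln_sm: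
  assumes "0 < e" "0 < e2" "0 < x"
  shows "ln (sbrio e e2 x - e2) = ln (4*e) + 2 * ln x - ln (sbrio e e2 x + e2)"
proof -
  let ?s = "sbrio e e2 x"
  have sq: "?s^2 = e2^2 + 4*e*x^2" unfolding sbrio_def using assms
    by (simp add: add_nonneg_nonneg)
  have sp: "?s + e2 > 0" using sbrio_ge[of e e2 x] assms by linarith
  have "(?s - e2) * (?s + e2) = 4*e*x^2" using sq by (simp add: algebra_simps power2_eq_square)
  then have eq: "?s - e2 = 4*e*x^2/(?s+e2)" using sp by (simp add: field_simps)
  have "ln (4*e*x^2/(?s+e2)) = ln (4*e*x^2) - ln (?s+e2)"
    using sp assms by (intro ln_divide_pos) auto
  also have "ln (4*e*x^2) = ln (4*e) + ln (x^2)" using assms by (intro ln_mult_pos) auto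
  also have "ln (x^2) = 2 * ln x" using assms by (simp add: ln_realpow)
  finally show ?thesis using eq by simp
qed

lemma finv_solve:
  assumes "0<e" "0<e2" "0<a" "0<b" "finv e e2 u a = finv e e2 w b"
  shows "a = b * exp (((u - w) - (sbrio e e2 a - sbrio e e2 b)/2)/e2
                 + (ln (sbrio e e2 a + e2) - ln (sbrio e e2 b + e2))/2)"
proof -
  define sa where "sa = sbrio e e2 a"
  define sb where "sb = sbrio e e2 b"
  define X where "X = ((u - w) - (sa - sb)/2)/e2 + (ln (sa + e2) - ln (sb + e2))/2"
  have "u - (sa + e2 * (ln (4*e) + 2 * ln a - ln (sa + e2)))/2
      = w - (sb + e2 * (ln (4*e) + 2 * ln b - ln (sb + e2)))/2"
    using assms(5) ln_sm[OF assms(1,2,3)] ln_sm[OF assms(1,2,4)]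
    unfolding finv_def sa_def sb_def by simp
  then have "e2 * ln a = e2 * (ln b + X)"
    unfolding X_def using assms(2) by (simp add: field_simps)
  then have "ln a = ln b + X" using assms(2) by simp
  then have "exp (ln a) = exp (ln b + X)" by simp
  then show ?thesis using assms(3,4) unfolding X_def sa_def sb_def by (simp add: exp_add)
qed


lemma trs_R1: "trs e1 e2 um vm up vp U V us vs \<Longrightarrow> xi < lam1 e1 e2 um vm \<Longrightarrow> U xi = um \<and> V xi = vm"
  unfolding trs_def by blast
lemma trs_R3: "trs e1 e2 um vm up vp U V us vs \<Longrightarrow> lam1 e1 e2 us vs < xi \<Longrightarrow> xi < lam2 e1 e2 us vs \<Longrightarrow> U xi = us \<and> V xi = vs"
  unfolding trs_def by blast
lemma trs_R4: "trs e1 e2 um vm up vp U V us vs \<Longrightarrow> lam2 e1 e2 us vs \<le> xi \<Longrightarrow> xi \<le> lam2 e1 e2 up vp \<Longrightarrow>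
   vs \<le> V xi \<and> V xi \<le> vp \<and> finv e1 e2 (U xi) (V xi) = finv e1 e2 us vs \<and> lam2 e1 e2 (U xi) (V xi) = xi"
  unfolding trs_def by blast
lemma trs_R5: "trs e1 e2 um vm up vp U V us vs \<Longrightarrow> lam2 e1 e2 up vp < xi \<Longrightarrow> U xi = up \<and> V xi = vp"
  unfolding trs_def by blast

theorem theorem6p2:
  fixes e2 um vm up vp :: real
    and U V :: "real \<Rightarrow> real \<Rightarrow> real"
  assumes "0 < e2" and "0 < vm" and "0 < vp" and "um < up"
    and "\<forall>\<^sub>F e1 in at_right 0. two_rarefaction_solution e1 e2 um vm up vp (U e1) (V e1)"
  shows "\<forall>xi. xi \<noteq> um - e2 \<longrightarrow>
           ((\<lambda>e1. U e1 xi) \<longlongrightarrow> U_lim e2 um up xi) (at_right 0) \<and>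
           ((\<lambda>e1. V e1 xi) \<longlongrightarrow> V_lim e2 um vm up vp xi) (at_right 0)"
proof (intro allI impI)
  fix xi assume xi: "xi \<noteq> um - e2"
  define F where "F = at_right (0::real)"
  have e2: "0 < e2" by fact
  have id0: "((\<lambda>e. e) \<longlongrightarrow> 0) F" unfolding F_def by (rule tendsto_ident_at)
  have epos: "eventually (\<lambda>e. 0 < e) F" unfolding F_def by (simp add: eventually_at_right_less)
  have "eventually (\<lambda>e. \<exists>us vs. trs e e2 um vm up vp (U e) (V e) us vs \<and> 0 < e) F"
    using assms(5) epos unfolding F_def trs_iff by eventually_elim blast
  then obtain usf vsf where ev: "eventually (\<lambda>e. trs e e2 um vm up vp (U e) (V e) (usf e) (vsf e) \<and> 0 < e) F"
    using choose_ev[where R="\<lambda>e us vs. trs e e2 um vm up vp (U e) (V e) us vs \<and> 0 < e"] by blast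
  have evb: "eventually (\<lambda>e. 0 < e \<and> 0 < vsf e \<and> vsf e < vm \<and> vsf e < vp
      \<and> binv e e2 (usf e) (vsf e) = binv e e2 um vm \<and> finv e e2 up vp = finv e e2 (usf e) (vsf e)) F"
    using ev by eventually_elim (simp add: trs_def)
  have sK: "\<And>c G. G \<le> F \<Longrightarrow> ((\<lambda>e. sbrio e e2 c) \<longlongrightarrow> e2) G"
    using sbrio_lim_const[OF e2] tendsto_mono[OF _ id0] by blast
  have svs: "((\<lambda>e. sbrio e e2 (vsf e)) \<longlongrightarrow> e2) F"
    using evb by (intro sbrio_lim_bounded[OF e2 id0, of _ vm]) (auto elim: eventually_mono)
  have "((\<lambda>e. um - (- sbrio e e2 vm + e2 * ln (sbrio e e2 vm + e2)) / 2
              + (- sbrio e e2 (vsf e) + e2 * ln (sbrio e e2 (vsf e) + e2)) / 2)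
        \<longlongrightarrow> um - (- e2 + e2 * ln (e2 + e2)) / 2 + (- e2 + e2 * ln (e2 + e2)) / 2) F"
    using e2 by (intro tendsto_intros sK svs) auto
  then have "((\<lambda>e. um - (- sbrio e e2 vm + e2 * ln (sbrio e e2 vm + e2)) / 2
              + (- sbrio e e2 (vsf e) + e2 * ln (sbrio e e2 (vsf e) + e2)) / 2) \<longlongrightarrow> um) F"
    by simp
  then have us_lim: "(usf \<longlongrightarrow> um) F"
  proof (rule Lim_transform_eventually)
    show "eventually (\<lambda>e. um - (- sbrio e e2 vm + e2 * ln (sbrio e e2 vm + e2)) / 2
              + (- sbrio e e2 (vsf e) + e2 * ln (sbrio e e2 (vsf e) + e2)) / 2 = usf e) F"
      using evb by eventually_elim (simp add: binv_def)
  qed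
  define vst where "vst = vstar_lim e2 um up vp"
  have "((\<lambda>e. vp * exp (- (((up - usf e) - (sbrio e e2 vp - sbrio e e2 (vsf e))/2)/e2
                 + (ln (sbrio e e2 vp + e2) - ln (sbrio e e2 (vsf e) + e2))/2)))
     \<longlongrightarrow> vp * exp (- (((up - um) - (e2 - e2)/2)/e2 + (ln (e2 + e2) - ln (e2 + e2))/2))) F"
    using e2 by (intro tendsto_intros sK svs us_lim) auto
  then have "((\<lambda>e. vp * exp (- (((up - usf e) - (sbrio e e2 vp - sbrio e e2 (vsf e))/2)/e2
                 + (ln (sbrio e e2 vp + e2) - ln (sbrio e e2 (vsf e) + e2))/2)))
     \<longlongrightarrow> vst) F"
    unfolding vst_def vstar_lim_def by (simp add: minus_divide_left)
  then have vs_lim: "(vsf \<longlongrightarrow> vst) F"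
  proof (rule Lim_transform_eventually)
    show "eventually (\<lambda>e. vp * exp (- (((up - usf e) - (sbrio e e2 vp - sbrio e e2 (vsf e))/2)/e2
                 + (ln (sbrio e e2 vp + e2) - ln (sbrio e e2 (vsf e) + e2))/2)) = vsf e) F"
      using evb
    proof eventually_elim
      case (elim e)
      then show ?case using finv_solve[OF _ e2 assms(3), of e "vsf e" up "usf e"]
        by (simp add: exp_minus field_simps)
    qed
  qed
  have l1m: "((\<lambda>e. lam1 e e2 um vm) \<longlongrightarrow> um - e2) F"
  proof -
    have "((\<lambda>e. um - e2/2 - sbrio e e2 vm / 2) \<longlongrightarrow> um - e2/2 - e2/2) F"
      by (intro tendsto_intros sK) auto
    then show ?thesis unfolding lam1_def by simp
  qed
  have l1s: "((\<lambda>e. lam1 e e2 (usf e) (vsf e)) \<longlongrightarrow> um - e2) F"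
  proof -
    have "((\<lambda>e. usf e - e2/2 - sbrio e e2 (vsf e) / 2) \<longlongrightarrow> um - e2/2 - e2/2) F"
      by (intro tendsto_intros us_lim svs) auto
    then show ?thesis unfolding lam1_def by simp
  qed
  have l2s: "((\<lambda>e. lam2 e e2 (usf e) (vsf e)) \<longlongrightarrow> um) F"
  proof -
    have "((\<lambda>e. usf e - e2/2 + sbrio e e2 (vsf e) / 2) \<longlongrightarrow> um - e2/2 + e2/2) F"
      by (intro tendsto_intros us_lim svs) auto
    then show ?thesis unfolding lam2_def by simp
  qed
  have l2p: "((\<lambda>e. lam2 e e2 up vp) \<longlongrightarrow> up) F"
  proof -
    have "((\<lambda>e. up - e2/2 + sbrio e e2 vp / 2) \<longlongrightarrow> up - e2/2 + e2/2) F"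
      by (intro tendsto_intros sK) auto
    then show ?thesis unfolding lam2_def by simp
  qed
  have "((\<lambda>e1. U e1 xi) \<longlongrightarrow> U_lim e2 um up xi) F \<and>
        ((\<lambda>e1. V e1 xi) \<longlongrightarrow> V_lim e2 um vm up vp xi) F"
  proof (cases "xi < um - e2")
    case True
    have "eventually (\<lambda>e. xi < lam1 e e2 um vm) F"
      using order_tendstoD(1)[OF l1m True] .
    then have "eventually (\<lambda>e. U e xi = um \<and> V e xi = vm) F"
      using ev by eventually_elim (blast dest: trs_R1)
    then have "eventually (\<lambda>e. U e xi = U_lim e2 um up xi) F"
          and "eventually (\<lambda>e. V e xi = V_lim e2 um vm up vp xi) F"
      using True by (auto simp: U_lim_def V_lim_def elim: eventually_mono)
    then show ?thesis by (auto intro: tendsto_eventually)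
  next
    case False
    then have xg: "um - e2 < xi" using xi by auto
    have ev1: "eventually (\<lambda>e. lam1 e e2 (usf e) (vsf e) < xi) F"
      using order_tendstoD(2)[OF l1s xg] .
    define A where "A e \<longleftrightarrow> xi < lam2 e e2 (usf e) (vsf e)" for e
    define B where "B e \<longleftrightarrow> lam2 e e2 (usf e) (vsf e) \<le> xi \<and> xi \<le> lam2 e e2 up vp" for e
    define C where "C e \<longleftrightarrow> lam2 e e2 up vp < xi" for e
    have cover: "eventually (\<lambda>e. A e \<or> B e \<or> C e) F"
      unfolding A_def B_def C_def by (intro always_eventually) auto
    define GA where "GA = inf F (principal {e. A e})"
    define GB where "GB = inf F (principal {e. B e})"
    define GC where "GC = inf F (principal {e. C e})"
    have GAF: "GA \<le> F" "GB \<le> F" "GC \<le> F" unfolding GA_def GB_def GC_def by auto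
    have rA: "((\<lambda>e. U e xi) \<longlongrightarrow> U_lim e2 um up xi) GA \<and> ((\<lambda>e. V e xi) \<longlongrightarrow> V_lim e2 um vm up vp xi) GA"
    proof (cases "xi \<le> um")
      case True
      have eq: "eventually (\<lambda>e. U e xi = usf e \<and> V e xi = vsf e) GA"
        unfolding GA_def eventually_inf_principal using ev ev1
        by eventually_elim (auto simp: A_def dest: trs_R3)
      have "(usf \<longlongrightarrow> um) GA" "(vsf \<longlongrightarrow> vst) GA"
        using tendsto_mono[OF GAF(1)] us_lim vs_lim by auto
      moreover have "U_lim e2 um up xi = um" "V_lim e2 um vm up vp xi = vst"
        using True xg assms(4) by (auto simp: U_lim_def V_lim_def vst_def)
      moreover have "eventually (\<lambda>e. usf e = U e xi) GA" "eventually (\<lambda>e. vsf e = V e xi) GA"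
        using eq by (auto elim: eventually_mono)
      ultimately show ?thesis
        using Lim_transform_eventually[of usf um GA "\<lambda>e. U e xi"]
              Lim_transform_eventually[of vsf vst GA "\<lambda>e. V e xi"] by simp
    next
      case False
      have "eventually (\<lambda>e. lam2 e e2 (usf e) (vsf e) < xi) F"
        using order_tendstoD(2)[OF l2s] False by auto
      then have "eventually (\<lambda>_. False) GA"
        unfolding GA_def eventually_inf_principal by eventually_elim (auto simp: A_def)
      then show ?thesis by (simp add: tendsto_False)
    qed
    have rC: "((\<lambda>e. U e xi) \<longlongrightarrow> U_lim e2 um up xi) GC \<and> ((\<lambda>e. V e xi) \<longlongrightarrow> V_lim e2 um vm up vp xi) GC"
    proof (cases "up \<le> xi")
      case True
      have eq: "eventually (\<lambda>e. U e xi = up \<and> V e xi = vp) GC"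
        unfolding GC_def eventually_inf_principal using ev
        by eventually_elim (auto simp: C_def dest: trs_R5)
      moreover have "U_lim e2 um up xi = up" "V_lim e2 um vm up vp xi = vp"
        using True xg assms(4) e2 by (auto simp: U_lim_def V_lim_def vstar_lim_def mult.assoc exp_add[symmetric] add_divide_distrib[symmetric])
      ultimately show ?thesis
        by (auto intro: tendsto_eventually elim: eventually_mono)
    next
      case False
      have "eventually (\<lambda>e. xi < lam2 e e2 up vp) F"
        using order_tendstoD(1)[OF l2p] False by auto
      then have "eventually (\<lambda>_. False) GC"
        unfolding GC_def eventually_inf_principal by eventually_elim (auto simp: C_def)
      then show ?thesis by (simp add: tendsto_False)
    qed
    have rB: "((\<lambda>e. U e xi) \<longlongrightarrow> U_lim e2 um up xi) GB \<and> ((\<lambda>e. V e xi) \<longlongrightarrow> V_lim e2 um vm up vp xi) GB"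
    proof (cases "um \<le> xi \<and> xi \<le> up")
      case True
      have evB: "eventually (\<lambda>e. 0 < e \<and> 0 < vsf e \<and> vsf e \<le> V e xi \<and> V e xi \<le> vp \<and>
           finv e e2 (U e xi) (V e xi) = finv e e2 (usf e) (vsf e) \<and> lam2 e e2 (U e xi) (V e xi) = xi) GB"
        unfolding GB_def eventually_inf_principal using ev
        by eventually_elim (auto simp: B_def trs_def dest: trs_R4)
      have id0B: "((\<lambda>e. e) \<longlongrightarrow> 0) GB" using tendsto_mono[OF GAF(2) id0] .
      have sV: "((\<lambda>e. sbrio e e2 (V e xi)) \<longlongrightarrow> e2) GB"
        using evB by (intro sbrio_lim_bounded[OF e2 id0B, of _ vp]) (auto elim: eventually_mono)
      have "((\<lambda>e. xi + e2/2 - sbrio e e2 (V e xi)/2) \<longlongrightarrow> xi + e2/2 - e2/2) GB"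
        by (intro tendsto_intros sV) auto
      then have "((\<lambda>e. xi + e2/2 - sbrio e e2 (V e xi)/2) \<longlongrightarrow> xi) GB" by simp
      then have U_l: "((\<lambda>e. U e xi) \<longlongrightarrow> xi) GB"
      proof (rule Lim_transform_eventually)
        show "eventually (\<lambda>e. xi + e2/2 - sbrio e e2 (V e xi)/2 = U e xi) GB"
          using evB by eventually_elim (auto simp: lam2_def)
      qed
      have usB: "(usf \<longlongrightarrow> um) GB" and vsB: "(vsf \<longlongrightarrow> vst) GB" and svsB: "((\<lambda>e. sbrio e e2 (vsf e)) \<longlongrightarrow> e2) GB"
        using tendsto_mono[OF GAF(2)] us_lim vs_lim svs by auto
      have "((\<lambda>e. vsf e * exp (((U e xi - usf e) - (sbrio e e2 (V e xi) - sbrio e e2 (vsf e))/2)/e2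
                 + (ln (sbrio e e2 (V e xi) + e2) - ln (sbrio e e2 (vsf e) + e2))/2))
         \<longlongrightarrow> vst * exp (((xi - um) - (e2 - e2)/2)/e2 + (ln (e2 + e2) - ln (e2 + e2))/2)) GB"
        using e2 by (intro tendsto_intros U_l usB vsB sV svsB) auto
      then have "((\<lambda>e. vsf e * exp (((U e xi - usf e) - (sbrio e e2 (V e xi) - sbrio e e2 (vsf e))/2)/e2
                 + (ln (sbrio e e2 (V e xi) + e2) - ln (sbrio e e2 (vsf e) + e2))/2))
         \<longlongrightarrow> vst * exp ((xi - um)/e2)) GB" by simp
      then have V_l: "((\<lambda>e. V e xi) \<longlongrightarrow> vst * exp ((xi - um)/e2)) GB"
      proof (rule Lim_transform_eventually)
        show "eventually (\<lambda>e. vsf e * exp (((U e xi - usf e) - (sbrio e e2 (V e xi) - sbrio e e2 (vsf e))/2)/e2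
                 + (ln (sbrio e e2 (V e xi) + e2) - ln (sbrio e e2 (vsf e) + e2))/2) = V e xi) GB"
          using evB
        proof eventually_elim
          case (elim e)
          then have "0 < V e xi" by linarith
          then show ?case using finv_solve[OF _ e2 _ _, of e "V e xi" "vsf e" "U e xi" "usf e"] elim
            by simp
        qed
      qed
      have "U_lim e2 um up xi = xi" "V_lim e2 um vm up vp xi = vst * exp ((xi - um)/e2)"
        using True xg assms(4) e2 by (auto simp: U_lim_def V_lim_def vst_def)
      then show ?thesis using U_l V_l by simp
    next
      case False
      have "eventually (\<lambda>e. xi < lam2 e e2 (usf e) (vsf e) \<or> lam2 e e2 up vp < xi) F"
      proof (cases "xi < um")
        case True
        then show ?thesis using order_tendstoD(1)[OF l2s True] by (auto elim: eventually_mono)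
      next
        case False': False
        then have "up < xi" using False by auto
        then show ?thesis using order_tendstoD(2)[OF l2p \<open>up < xi\<close>] by (auto elim: eventually_mono)
      qed
      then have "eventually (\<lambda>_. False) GB"
        unfolding GB_def eventually_inf_principal by eventually_elim (auto simp: B_def)
      then show ?thesis by (simp add: tendsto_False)
    qed
    show ?thesis
      using tendsto_split3[OF cover] rA rB rC unfolding GA_def GB_def GC_def by blast
  qed
  then show "((\<lambda>e1. U e1 xi) \<longlongrightarrow> U_lim e2 um up xi) (at_right 0) \<and>
        ((\<lambda>e1. V e1 xi) \<longlongrightarrow> V_lim e2 um vm up vp xi) (at_right 0)" unfolding F_def .
qed

end
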